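(* Let $A$ be a symmetric positive definite real $2\times 2$ matrix, $G=\begin{pmatrix}a&b\\ c&d\end{pmatrix}$ a real matrix, and $S=\begin{pmatrix}s_{11}& s_{12}\\ s_{12}& s_{22}\end{pmatrix}$ a fixed real symmetric matrix such that $SG+G^TS=2SAS$ and $\mathrm{trace}(G-AS)=0$ (so that $\tilde Gz=Sz+(G-AS)z$ is a SOHHD), let $\Phi(x,y)=\frac12(s_{11}x^2+2s_{12}xy+s_{22}y^2)$ and $\mu=e^{2\Phi(x,y)}dxdy$. For $z=(x,y)\in {\mathbb R}^2$ let $$ \mathbf{P}(z)= Gz+\mathbf{H}(z)= (ax+by,cx+dy)+\mathbf{H}(x,y), $$ where $$ \mathbf{H}(x,y)=(\alpha_{0,0}+\alpha_{2,0}x^{2}+\alpha_{2,1}xy+\alpha_{2,2}y^{2},\beta_{0,0}+\beta_{2,0}x^{2}+\beta_{2,1}xy+\beta_{2,2}y^{2}) $$ with real coefficients. Then: (i) The following are equivalent: the system \[ \begin{cases} s_{11}\alpha_{2,0}+s_{12}\beta_{2,0}=0, \\ s_{12}\alpha_{2,2}+s_{22}\beta_{2,2}=0, \\ s_{11}\alpha_{2,2}+s_{12}\alpha_{2,1}+s_{12}\beta_{2,2}+s_{22}\beta_{2,1} =0, \\ s_{11} \alpha_{2,1}+s_{12}\alpha_{2,0}+s_{12}\beta_{2,1}+s_{22}\beta_{2,0} =0, \\ s_{11}\alpha_{0,0}+s_{12}\beta_{0,0}+\alpha_{2,0}+\frac{\beta_{2,1}}{2}=0, \\ s_{12}\alpha_{0,0}+s_{22}\beta_{0,0}+\beta_{2,2}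 +\frac{\alpha_{2,1}}{2}=0 \end{cases} \] holds; $\mathrm{div}_{\mu}(\mathbf{H})=0$; $\langle \nabla \Phi, \mathbf{H} \rangle +\frac 12\mathrm{div} \mathbf{H}= 0$; $\mu$ is an infinitesimally invariant measure for $\big (\frac{1}{2} \mathrm{trace}(A\nabla^2) + \langle \mathbf{P}, \nabla \cdot \rangle, C_0^{\infty}({\mathbb R}^2)\big )$. Moreover, in any of these cases the decomposition \begin{eqnarray*} \tilde{\mathbf{P}}(z) :=Sz+\mathbf{P}(z)-ASz=\nabla \Phi(x,y)+(G-AS)\begin{pmatrix}x\\ y \end{pmatrix}+\mathbf{H}(x,y) \end{eqnarray*} is a SOHHD if and only if $\alpha_{2,0}=-\frac{\beta_{2,1}}{2}$ and $\beta_{2,2} =-\frac{\alpha_{2,1}}{2}$.\\ (ii) Suppose that $\mu$ is infinitesimally invariant for $(\frac{1}{2} \mathrm{trace}(A\nabla^2) + \langle \mathbf{P}, \nabla \cdot \rangle, C_0^{\infty}({\mathbb R}^2))$. Then $\mu$ is infinitesimally invariant for $(L, C_0^{\infty}({\mathbb R}^2))$, where $L$ is any of $\frac{1}{2} \mathrm{trace}(A\nabla^2) + \langle Gz, \nabla \cdot \rangle$, $\frac12\Delta+\langle Sz,\nabla\cdot\rangle$, $\frac12\Delta+\langle \tilde Gz,\nabla\cdot\rangle$, $\frac12\Delta+\langle \tilde{\mathbf P},\nabla\cdot\rangle$.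
   Context: $\mathrm{div}_\mu(\mathbf H)=0$ means $\int\langle\mathbf H,\nabla f\rangle\,d\mu=0$ for all $f\in C_0^\infty(\mathbb R^2)$. SOHHD of a continuous field: $\nabla\Phi+\mathbf B$ with $\Phi,\mathbf B\in C^1$, $\mathrm{div}\,\mathbf B=0$ and $\langle\nabla\Phi,\mathbf B\rangle=0$ everywhere. Infinitesimal invariance of $\widehat\mu$ for $(L,C_0^\infty)$: $\int Lf\,d\widehat\mu=0$ for all $f\in C_0^\infty$. *)

theory Defs
  imports "HOL-Analysis.Analysis"
begin

text \<open>Points of the plane are vectors z :: real^2 with x = z$1, y = z$2.
  2x2 matrices are real^2^2, acting by *v.\<close>

definition sym_mat :: "real^2^2 \<Rightarrow> bool" where
  "sym_mat M \<longleftrightarrow> transpose M = M"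

definition pos_def_mat :: "real^2^2 \<Rightarrow> bool" where
  "pos_def_mat M \<longleftrightarrow> (\<forall>v::real^2. v \<noteq> 0 \<longrightarrow> v \<bullet> (M *v v) > 0)"

definition pd :: "2 \<Rightarrow> (real^2 \<Rightarrow> real) \<Rightarrow> real^2 \<Rightarrow> real" where
  "pd i f z = frechet_derivative f (at z) (axis i 1)"

definition grad :: "(real^2 \<Rightarrow> real) \<Rightarrow> real^2 \<Rightarrow> real^2" where
  "grad f z = (\<chi> i. pd i f z)"

definition hess :: "(real^2 \<Rightarrow> real) \<Rightarrow> real^2 \<Rightarrow> real^2^2" where
  "hess f z = (\<chi> i j. pd j (pd i f) z)"

definition div_field :: "(real^2 \<Rightarrow> real^2) \<Rightarrow> real^2 \<Rightarrow> real" where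
  "div_field B z = (\<Sum>i\<in>UNIV. pd i (\<lambda>w. B w $ i) z)"

fun Ck :: "nat \<Rightarrow> (real^2 \<Rightarrow> real) \<Rightarrow> bool" where
  "Ck 0 f \<longleftrightarrow> continuous_on UNIV f"
| "Ck (Suc k) f \<longleftrightarrow> continuous_on UNIV f \<and> (\<forall>z. f differentiable at z) \<and> (\<forall>i. Ck k (pd i f))"

definition C0_inf :: "(real^2 \<Rightarrow> real) set" where
  "C0_inf = {f. (\<forall>k. Ck k f) \<and> compact (closure {z. f z \<noteq> 0})}"

definition Lop :: "real^2^2 \<Rightarrow> (real^2 \<Rightarrow> real^2) \<Rightarrow> (real^2 \<Rightarrow> real) \<Rightarrow> real^2 \<Rightarrow> real" where
  "Lop A P f z = 1/2 * trace (A ** hess f z) + P z \<bullet> grad f z"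

definition inf_invariant :: "(real^2) measure \<Rightarrow> ((real^2 \<Rightarrow> real) \<Rightarrow> real^2 \<Rightarrow> real) \<Rightarrow> bool" where
  "inf_invariant \<mu> L \<longleftrightarrow> (\<forall>f\<in>C0_inf. integral\<^sup>L \<mu> (L f) = 0)"

definition div_mu_zero :: "(real^2) measure \<Rightarrow> (real^2 \<Rightarrow> real^2) \<Rightarrow> bool" where
  "div_mu_zero \<mu> H \<longleftrightarrow> (\<forall>f\<in>C0_inf. integral\<^sup>L \<mu> (\<lambda>z. H z \<bullet> grad f z) = 0)"

definition C1_field :: "(real^2 \<Rightarrow> real^2) \<Rightarrow> bool" where
  "C1_field B \<longleftrightarrow> (\<forall>i. Ck 1 (\<lambda>z. B z $ i))"

text \<open>Strong orthogonal Helmholtz-Hodge decomposition \<nabla>\<Phi> + B.\<close>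
definition is_SOHHD :: "(real^2 \<Rightarrow> real) \<Rightarrow> (real^2 \<Rightarrow> real^2) \<Rightarrow> bool" where
  "is_SOHHD Phi B \<longleftrightarrow> Ck 1 Phi \<and> C1_field B \<and> (\<forall>z. div_field B z = 0)
      \<and> (\<forall>z. grad Phi z \<bullet> B z = 0)"

end

theory Submission
  imports Defs "HOL-Computational_Algebra.Polynomial"
begin



lemma pd_eq: "(f has_derivative f') (at z) \<Longrightarrow> pd i f z = f' (axis i 1)"
  unfolding pd_def using frechet_derivative_at by metis

lemma vec_nth_has_derivative[derivative_intros]:
  "((\<lambda>z::real^2. z$i) has_derivative (\<lambda>h. h$i)) (at z)"
  by (simp add: bounded_linear_imp_has_derivative bounded_linear_vec_nth)

definition quad :: "real \<Rightarrow> real \<Rightarrow> real \<Rightarrow> real \<Rightarrow> real \<Rightarrow> real \<Rightarrow> real^2 \<Rightarrow> real" where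
  "quad c0 c1 c2 c3 c4 c5 z = c0 + c1 * z$1 + c2 * z$2 + c3 * (z$1)^2 + c4 * z$1 * z$2 + c5 * (z$2)^2"

lemma quad_has_derivative:
  "(quad c0 c1 c2 c3 c4 c5 has_derivative
     (\<lambda>h. c1 * h$1 + c2 * h$2 + c3 * (2 * z$1 * h$1) + c4 * (h$1 * z$2 + z$1 * h$2) + c5 * (2 * z$2 * h$2))) (at z)"
  unfolding quad_def[abs_def]
  by (auto intro!: derivative_eq_intros simp: fun_eq_iff algebra_simps)

lemma axis_simps[simp]: "axis (1::2) (1::real) $ 1 = 1" "axis (1::2) (1::real) $ 2 = 0"
  "axis (2::2) (1::real) $ 1 = 0" "axis (2::2) (1::real) $ 2 = 1"
  by (simp_all add: axis_def)

lemma pd_quad1: "pd 1 (quad c0 c1 c2 c3 c4 c5) z = c1 + 2 * c3 * z$1 + c4 * z$2"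
  by (subst pd_eq[OF quad_has_derivative]) (simp add: algebra_simps)
lemma pd_quad2: "pd 2 (quad c0 c1 c2 c3 c4 c5) z = c2 + c4 * z$1 + 2 * c5 * z$2"
  by (subst pd_eq[OF quad_has_derivative]) (simp add: algebra_simps)




lemma integrable_supp:
  fixes F :: "real^2 \<Rightarrow> real"
  assumes "continuous_on UNIV F" "\<And>z. norm z > R \<Longrightarrow> F z = 0"
  shows "integrable lborel F"
proof -
  have "integrable lborel (\<lambda>x. indicator (cball 0 R) x *\<^sub>R F x)"
    by (rule borel_integrable_compact) (auto intro: continuous_on_subset[OF assms(1)])
  moreover have "(\<lambda>x. indicator (cball 0 R) x *\<^sub>R F x) = F"
    using assms(2) by (auto simp: fun_eq_iff indicator_def not_le)
  ultimately show ?thesis by simp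
qed

lemma pd_zero_outside:
  assumes "closed K" "\<And>z. z \<notin> K \<Longrightarrow> g z = 0" "z \<notin> K"
  shows "pd i g z = 0"
proof -
  have "((\<lambda>_. 0::real) has_derivative (\<lambda>_. 0)) (at z)" by simp
  then have "(g has_derivative (\<lambda>_. 0)) (at z)"
    by (rule has_derivative_transform_within_open[where s="- K"]) (use assms in auto)
  then show ?thesis by (simp add: pd_eq)
qed

lemma phi_deriv:
  fixes g :: "real^2 \<Rightarrow> real"
  assumes "\<And>z. g differentiable at z"
  shows "((\<lambda>t. g (z + t *\<^sub>R axis i 1)) has_real_derivative pd i g (z + t *\<^sub>R axis i 1)) (at t)"
proof -
  let ?D = "frechet_derivative g (at (z + t *\<^sub>R axis i 1))"
  have g': "(g has_derivative ?D) (at (z + t *\<^sub>R axis i 1))"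
    using assms frechet_derivative_works by blast
  have l: "linear ?D" using assms linear_frechet_derivative by blast
  have "((\<lambda>t. z + t *\<^sub>R axis i 1) has_derivative (\<lambda>s. s *\<^sub>R axis i 1)) (at t)"
    by (auto intro!: derivative_eq_intros)
  from diff_chain_at[OF this g'] have "((\<lambda>t. g (z + t *\<^sub>R axis i 1)) has_derivative (\<lambda>s. ?D (s *\<^sub>R axis i 1))) (at t)"
    by (simp add: o_def)
  moreover have "(\<lambda>s. ?D (s *\<^sub>R axis i 1)) = (\<lambda>s. pd i g (z + t *\<^sub>R axis i 1) * s)"
    using linear_scale[OF l] by (auto simp: pd_def fun_eq_iff)
  ultimately show ?thesis by (simp add: has_field_derivative_def)
qed

lemma ibp:
  fixes g :: "real^2 \<Rightarrow> real"
  assumes dg: "\<And>z. g differentiable at z" and cont: "continuous_on UNIV (pd i g)"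
    and zero: "\<And>z. norm z > R \<Longrightarrow> g z = 0"
  shows "integral\<^sup>L lborel (pd i g) = 0"
proof -
  define e :: "real^2" where "e = axis i 1"
  have ne: "norm e = 1" by (simp add: e_def)
  have contg: "continuous_on UNIV g"
    using dg differentiable_imp_continuous_on differentiable_at_imp_differentiable_on by blast
  have pz: "pd i g z = 0" if "norm z > R" for z
    by (rule pd_zero_outside[where K="cball 0 R"]) (use zero that in auto)
  have "compact (pd i g ` cball 0 R)"
    by (rule compact_continuous_image) (auto intro: continuous_on_subset[OF cont])
  then obtain M where M: "M > 0" "\<And>z. z \<in> cball 0 R \<Longrightarrow> norm (pd i g z) \<le> M"
    using compact_imp_bounded bounded_pos by (metis image_eqI)
  have Mb: "\<bar>pd i g z\<bar> \<le> M" for z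
    using M pz[of z] by (cases "norm z \<le> R") auto
  define h :: "nat \<Rightarrow> real" where "h n = 1 / Suc n" for n
  have hpos: "h n > 0" "h n \<le> 1" for n by (auto simp: h_def)
  define s where "s n z = (g (z + h n *\<^sub>R e) - g z) / h n" for n z
  have conts: "continuous_on UNIV (s n)" for n
    unfolding s_def[abs_def]
    by (intro continuous_intros continuous_on_compose2[OF contg]) (use hpos[of n] in auto)
  have sint: "integral\<^sup>L lborel (s n) = 0" for n
  proof -
    have i1: "integrable lborel g" by (rule integrable_supp[OF contg zero])
    have i2: "integrable lborel (\<lambda>z. g (z + h n *\<^sub>R e))"
    proof (rule integrable_supp[where R="R + 1"])
      show "continuous_on UNIV (\<lambda>z. g (z + h n *\<^sub>R e))"
        by (intro continuous_intros continuous_on_compose2[OF contg]) auto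
      fix z :: "real^2" assume "norm z > R + 1"
      moreover have "norm (z + h n *\<^sub>R e) \<ge> norm z - h n"
        using norm_triangle_ineq2[of z "- (h n *\<^sub>R e)"] hpos[of n] ne by auto
      ultimately show "g (z + h n *\<^sub>R e) = 0" using hpos[of n] by (intro zero) auto
    qed
    have "integral\<^sup>L lborel (\<lambda>z. g (z + h n *\<^sub>R e)) = integral\<^sup>L lborel (\<lambda>z. g (h n *\<^sub>R e + z))"
      by (simp add: add.commute)
    also have "\<dots> = integral\<^sup>L (distr lborel borel ((+) (h n *\<^sub>R e))) g"
      by (rule integral_distr[symmetric]) (auto intro: borel_measurable_continuous_onI contg)
    also have "\<dots> = integral\<^sup>L lborel g" by (simp add: lborel_distr_plus)
    finally have "integral\<^sup>L lborel (\<lambda>z. g (z + h n *\<^sub>R e)) = integral\<^sup>L lborel g" .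
    then show ?thesis unfolding s_def using i1 i2 by simp
  qed
  define w where "w z = indicator (cball (0::real^2) (R + 1)) z *\<^sub>R M" for z
  have wint: "integrable lborel w"
    unfolding w_def by (rule borel_integrable_compact) auto
  have bound: "norm (s n z) \<le> w z" for n z
  proof (cases "norm z > R + 1")
    case True
    have "norm (z + h n *\<^sub>R e) \<ge> norm z - h n"
      using norm_triangle_ineq2[of z "- (h n *\<^sub>R e)"] hpos[of n] ne by auto
    then have "g (z + h n *\<^sub>R e) = 0" "g z = 0" using True hpos[of n] by (auto intro!: zero)
    then show ?thesis using M by (simp add: s_def w_def)
  next
    case False
    obtain t where t: "0 < t" "t < h n"
      "g (z + h n *\<^sub>R e) - g (z + 0 *\<^sub>R e) = (h n - 0) * pd i g (z + t *\<^sub>R e)"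
      using MVT2[of 0 "h n" "\<lambda>t. g (z + t *\<^sub>R e)" "\<lambda>t. pd i g (z + t *\<^sub>R e)"] hpos[of n]
        phi_deriv[OF dg] unfolding e_def by blast
    then have "s n z = pd i g (z + t *\<^sub>R e)" using hpos[of n] by (simp add: s_def)
    then show ?thesis using False Mb by (simp add: w_def)
  qed
  have lim: "(\<lambda>n. s n z) \<longlonglongrightarrow> pd i g z" for z
  proof -
    have "((\<lambda>t. g (z + t *\<^sub>R e)) has_real_derivative pd i g (z + 0 *\<^sub>R e)) (at 0)"
      using phi_deriv[OF dg] unfolding e_def by blast
    then have "((\<lambda>y. (g (z + y *\<^sub>R e) - g z) / y) \<longlongrightarrow> pd i g z) (at 0)"
      by (simp add: has_field_derivative_iff)
    moreover have "filterlim h (at 0) sequentially"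
    proof (rule tendsto_imp_filterlim_at_right[THEN filterlim_mono])
      show "h \<longlonglongrightarrow> 0" unfolding h_def using LIMSEQ_Suc[OF lim_inverse_n'] by (simp add: o_def)
      show "\<forall>\<^sub>F n in sequentially. 0 < h n" using hpos by simp
    qed (simp_all add: at_within_le_at)
    ultimately show ?thesis unfolding s_def by (rule filterlim_compose)
  qed
  have "(\<lambda>n. integral\<^sup>L lborel (s n)) \<longlonglongrightarrow> integral\<^sup>L lborel (pd i g)"
    by (rule integral_dominated_convergence[where w=w])
      (use conts cont wint bound lim in \<open>auto intro: borel_measurable_continuous_onI\<close>)
  then show ?thesis using sint LIMSEQ_unique[OF _ tendsto_const] by simp
qed




lemma pd_add: "f differentiable at z \<Longrightarrow> g differentiable at z \<Longrightarrow>
  pd i (\<lambda>z. f z + g z) z = pd i f z + pd i g z"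
  by (subst pd_eq[OF has_derivative_add[OF frechet_derivative_works[THEN iffD1] frechet_derivative_works[THEN iffD1]]])
     (auto simp: pd_def)

lemma pd_mult: "f differentiable at z \<Longrightarrow> g differentiable at z \<Longrightarrow>
  pd i (\<lambda>z. f z * g z :: real) z = pd i f z * g z + f z * pd i g z"
  by (subst pd_eq[OF has_derivative_mult[OF frechet_derivative_works[THEN iffD1] frechet_derivative_works[THEN iffD1]]])
     (auto simp: pd_def)

lemma pd_const[simp]: "pd i (\<lambda>z. c) z = 0"
  by (simp add: pd_def)

lemma C0_facts:
  assumes "f \<in> C0_inf"
  shows "\<And>z. f differentiable at z" "continuous_on UNIV f"
    "\<And>k z. pd k f differentiable at z" "\<And>k. continuous_on UNIV (pd k f)"
    "\<And>k i. continuous_on UNIV (pd i (pd k f))"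
    "\<exists>R. \<forall>z. norm z > R \<longrightarrow> f z = 0"
proof -
  have "Ck 2 f" using assms by (simp add: C0_inf_def)
  then have c2: "Ck (Suc (Suc 0)) f" by (simp add: numeral_2_eq_2)
  then show "\<And>z. f differentiable at z" "continuous_on UNIV f"
    "\<And>k z. pd k f differentiable at z" "\<And>k. continuous_on UNIV (pd k f)"
    "\<And>k i. continuous_on UNIV (pd i (pd k f))" by auto
  have "compact (closure {z. f z \<noteq> 0})" using assms by (simp add: C0_inf_def)
  then have "bounded {z. f z \<noteq> 0}" using compact_closure by blast
  then obtain R where "\<forall>z\<in>{z. f z \<noteq> 0}. norm z \<le> R" using bounded_iff by blast
  then show "\<exists>R. \<forall>z. norm z > R \<longrightarrow> f z = 0" by (metis (mono_tags) mem_Collect_eq not_le)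
qed




lemma pd_sum: "finite I \<Longrightarrow> (\<And>k. k \<in> I \<Longrightarrow> F k differentiable at z) \<Longrightarrow>
  pd i (\<lambda>z. \<Sum>k\<in>I. F k z) z = (\<Sum>k\<in>I. pd i (F k) z)"
proof -
  assume I: "finite I" and d: "\<And>k. k \<in> I \<Longrightarrow> F k differentiable at z"
  have "((\<lambda>z. \<Sum>k\<in>I. F k z) has_derivative (\<lambda>h. \<Sum>k\<in>I. frechet_derivative (F k) (at z) h)) (at z)"
    by (rule has_derivative_sum) (use d frechet_derivative_works in blast)
  from frechet_derivative_at[OF this] show ?thesis unfolding pd_def by (metis (no_types))
qed

lemma pd_cmult: "f differentiable at z \<Longrightarrow> pd i (\<lambda>z. c * f z :: real) z = c * pd i f z"
  using pd_mult[of "\<lambda>_. c" z f i] by simp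

lemma sym2: "sym_mat M \<Longrightarrow> M$2$1 = M$1$2"
proof -
  assume "sym_mat M"
  then have "(transpose M)$2$1 = M$2$1" by (simp add: sym_mat_def)
  then show ?thesis by (simp add: transpose_def)
qed

lemma Phi_quad:
  assumes "\<And>z. Phi z = 1/2 * (S$1$1 * (z$1)^2 + 2 * S$1$2 * z$1 * z$2 + S$2$2 * (z$2)^2)"
  shows "Phi = quad 0 0 0 (S$1$1/2) (S$1$2) (S$2$2/2)"
  using assms by (auto simp: fun_eq_iff quad_def algebra_simps)

lemma rho_facts:
  fixes S :: "real^2^2"
  assumes S_sym: "sym_mat S"
    and Phi_def: "\<And>z. Phi z = 1/2 * (S$1$1 * (z$1)^2 + 2 * S$1$2 * z$1 * z$2 + S$2$2 * (z$2)^2)"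
  shows "\<And>z. (\<lambda>z. exp (2 * Phi z)) differentiable at z"
    "\<And>i z. pd i (\<lambda>z. exp (2 * Phi z)) z = 2 * (S *v z)$i * exp (2 * Phi z)"
    "continuous_on UNIV (\<lambda>z. exp (2 * Phi z))"
    "\<And>i. continuous_on UNIV (pd i (\<lambda>z. exp (2 * Phi z)))"
    "\<And>i z. pd i Phi z = (S *v z)$i"
    "\<And>z. Phi differentiable at z"
proof -
  note Pq = Phi_quad[OF Phi_def]
  let ?q = "quad 0 0 0 (S$1$1/2) (S$1$2) (S$2$2/2)"
  have D: "((\<lambda>z. exp (2 * ?q z)) has_derivative (\<lambda>h. exp (2 * ?q z) * (2 * (0 * h$1 + 0 * h$2 + (S$1$1/2) * (2 * z$1 * h$1) + (S$1$2) * (h$1 * z$2 + z$1 * h$2) + (S$2$2/2) * (2 * z$2 * h$2))))) (at z)" for z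
    by (auto intro!: derivative_eq_intros quad_has_derivative)
  then show "\<And>z. (\<lambda>z. exp (2 * Phi z)) differentiable at z" unfolding Pq differentiable_def by blast
  show pdr: "pd i (\<lambda>z. exp (2 * Phi z)) z = 2 * (S *v z)$i * exp (2 * Phi z)" for i z
    unfolding Pq pd_eq[OF D]
    using exhaust_2[of i] sym2[OF S_sym]
    by (auto simp: matrix_vector_mult_def sum_2 algebra_simps)
  show "continuous_on UNIV (\<lambda>z. exp (2 * Phi z))" unfolding Pq quad_def
    by (intro continuous_intros)
  show "continuous_on UNIV (pd i (\<lambda>z. exp (2 * Phi z)))" for i
  proof -
    have e: "pd i (\<lambda>z. exp (2 * Phi z)) = (\<lambda>z. 2 * (S *v z)$i * exp (2 * Phi z))"
      using pdr by auto
    show ?thesis unfolding e unfolding Pq quad_def matrix_vector_mult_def sum_2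
      by (intro continuous_intros)
  qed
  show "pd i Phi z = (S *v z)$i" for i z
    unfolding Pq using exhaust_2[of i] sym2[OF S_sym]
    by (auto simp: pd_quad1 pd_quad2 matrix_vector_mult_def sum_2 algebra_simps)
  show "Phi differentiable at z" for z
    unfolding Pq differentiable_def using quad_has_derivative by blast
qed




lemma gen_int:
  fixes A S :: "real^2^2" and W U :: "real^2 \<Rightarrow> real^2" and f :: "real^2 \<Rightarrow> real"
  assumes A_sym: "sym_mat A" and S_sym: "sym_mat S"
    and Phi_def: "\<And>z. Phi z = 1/2 * (S$1$1 * (z$1)^2 + 2 * S$1$2 * z$1 * z$2 + S$2$2 * (z$2)^2)"
    and U_def: "\<And>z. U z = W z - A *v (S *v z)"
    and U_C1: "C1_field U"
    and f: "f \<in> C0_inf"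
  shows "integral\<^sup>L (density lborel (\<lambda>z. ennreal (exp (2 * Phi z)))) (Lop A W f)
    = - integral\<^sup>L lborel (\<lambda>z. f z * exp (2 * Phi z) * (div_field U z + 2 * ((S *v z) \<bullet> U z)))"
proof -
  define \<rho> where "\<rho> z = exp (2 * Phi z)" for z
  have rd: "\<And>z. \<rho> differentiable at z" and rpd: "\<And>i z. pd i \<rho> z = 2 * (S *v z)$i * \<rho> z"
    and rc: "continuous_on UNIV \<rho>" and rpc: "\<And>i. continuous_on UNIV (pd i \<rho>)"
    using rho_facts[OF S_sym Phi_def] unfolding \<rho>_def[abs_def] by auto
  note cf = C0_facts[OF f]
  obtain R where R: "\<And>z. norm z > R \<Longrightarrow> f z = 0" using cf(6) by blast
  have fd: "\<And>z. f differentiable at z" and fc: "continuous_on UNIV f"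
    and fkd: "\<And>k z. pd k f differentiable at z" and fkc: "\<And>k. continuous_on UNIV (pd k f)"
    and fikc: "\<And>k i. continuous_on UNIV (pd i (pd k f))" using cf by auto
  have fk0: "pd k f z = 0" if "norm z > R" for k z
    by (rule pd_zero_outside[where K="cball 0 R"]) (use R that in auto)
  have fik0: "pd i (pd k f) z = 0" if "norm z > R" for i k z
    by (rule pd_zero_outside[where K="cball 0 R"]) (use fk0 that in auto)
  have Uc: "\<And>i. continuous_on UNIV (\<lambda>z. U z $ i)" and Ud: "\<And>i z. (\<lambda>z. U z $ i) differentiable at z"
    and Upc: "\<And>i j. continuous_on UNIV (pd j (\<lambda>z. U z $ i))"
    using U_C1 by (auto simp: C1_field_def)
  have Svc: "continuous_on UNIV (\<lambda>z. (S *v z) $ i)" for i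
    unfolding matrix_vector_mult_def by (simp add: sum_2) (intro continuous_intros)
  have vl: "continuous_on UNIV V" if "\<And>i. continuous_on UNIV (\<lambda>z. V z $ i)" for V :: "real^2 \<Rightarrow> real^2"
    using continuous_on_vec_lambda[of UNIV "\<lambda>i z. V z $ i", OF that] by (simp add: vec_lambda_eta)
  have UV: "continuous_on UNIV U" by (rule vl[OF Uc])
  have SV: "continuous_on UNIV (\<lambda>z. S *v z)" by (rule vl[OF Svc])
  have A21: "A$2$1 = A$1$2" using sym2[OF A_sym] .
  have W: "W z $ i = U z $ i + A$i$1 * (S *v z)$1 + A$i$2 * (S *v z)$2" for z i
    using U_def[of z] by (simp add: matrix_vector_mult_def sum_2)
  have Wc: "continuous_on UNIV (\<lambda>z. W z $ i)" for i
    unfolding W by (intro continuous_intros Uc Svc)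
  have WV: "continuous_on UNIV W" by (rule vl[OF Wc])
  have Lop: "Lop A W f z = 1/2 * (A$1$1 * pd 1 (pd 1 f) z + A$1$2 * pd 1 (pd 2 f) z
      + A$2$1 * pd 2 (pd 1 f) z + A$2$2 * pd 2 (pd 2 f) z) + (W z $ 1 * pd 1 f z + W z $ 2 * pd 2 f z)" for z
    by (simp add: Lop_def trace_def matrix_matrix_mult_def hess_def grad_def inner_vec_def sum_2)
  define g where "g i z = 1/2 * \<rho> z * (A$i$1 * pd 1 f z + A$i$2 * pd 2 f z) + U z $ i * \<rho> z * f z" for i z
  have gd: "g i differentiable at z" for i z
    unfolding g_def[abs_def] using rd fd fkd Ud by (intro derivative_intros) auto
  have gpd: "pd i (g i) z = 1/2 * (pd i \<rho> z * (A$i$1 * pd 1 f z + A$i$2 * pd 2 f z) + \<rho> z * (A$i$1 * pd i (pd 1 f) z + A$i$2 * pd i (pd 2 f) z))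
      + ((pd i (\<lambda>z. U z $ i) z * \<rho> z + U z $ i * pd i \<rho> z) * f z + U z $ i * \<rho> z * pd i f z)" for i z
    unfolding g_def[abs_def] using rd fd fkd Ud
    apply (simp only: pd_add pd_mult pd_const differentiable_add differentiable_mult differentiable_const rd fd fkd Ud)
    apply (simp add: algebra_simps)
    done
  define F where "F z = f z * \<rho> z * (div_field U z + 2 * ((S *v z) \<bullet> U z))" for z
  have key: "\<rho> z * Lop A W f z = pd 1 (g 1) z + pd 2 (g 2) z - F z" for z
    apply (simp only: gpd Lop W rpd div_field_def sum_2 inner_vec_def A21 F_def)
    apply (simp add: algebra_simps)
    done
  have pdgc: "continuous_on UNIV (pd i (g i))" for i
  proof -
    have e: "pd i (g i) = (\<lambda>z. 1/2 * (pd i \<rho> z * (A$i$1 * pd 1 f z + A$i$2 * pd 2 f z) + \<rho> z * (A$i$1 * pd i (pd 1 f) z + A$i$2 * pd i (pd 2 f) z))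
      + ((pd i (\<lambda>z. U z $ i) z * \<rho> z + U z $ i * pd i \<rho> z) * f z + U z $ i * \<rho> z * pd i f z))"
      using gpd by auto
    show ?thesis unfolding e by (intro continuous_intros rpc rc fkc fikc Upc UV fc)
  qed
  have g0: "g i z = 0" if "norm z > R" for i z
    using R[OF that] fk0[OF that] by (simp add: g_def)
  have pdg0: "pd i (g i) z = 0" if "norm z > R" for i z
    using R[OF that] fk0[OF that] fik0[OF that] by (simp add: gpd)
  have ig: "integral\<^sup>L lborel (pd i (g i)) = 0" for i
    by (rule ibp[OF gd pdgc g0])
  have intg: "integrable lborel (pd i (g i))" for i
    by (rule integrable_supp[OF pdgc pdg0])
  have Fc: "continuous_on UNIV F"
    unfolding F_def[abs_def] div_field_def sum_2 inner_vec_def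
    by (intro continuous_intros rc fc Upc UV SV)
  have intF: "integrable lborel F"
    by (rule integrable_supp[OF Fc, of R]) (use R in \<open>simp add: F_def\<close>)
  have Lc: "continuous_on UNIV (Lop A W f)"
    unfolding Lop[abs_def] by (intro continuous_intros fkc fikc WV)
  have "integral\<^sup>L (density lborel (\<lambda>z. ennreal (\<rho> z))) (Lop A W f) = integral\<^sup>L lborel (\<lambda>z. \<rho> z *\<^sub>R Lop A W f z)"
    by (rule integral_density) (auto intro: borel_measurable_continuous_onI Lc rc rc[unfolded \<rho>_def[abs_def]] simp: \<rho>_def)
  also have "\<dots> = integral\<^sup>L lborel (\<lambda>z. pd 1 (g 1) z + pd 2 (g 2) z - F z)"
    using key by simp
  also have "\<dots> = - integral\<^sup>L lborel F"
    using intg intF ig by simp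
  finally show ?thesis unfolding \<rho>_def F_def by simp
qed




primrec hp :: "nat \<Rightarrow> real poly" where
  "hp 0 = 1"
| "hp (Suc n) = [:0,0,1:] * (hp n - pderiv (hp n))"

definition hb :: "nat \<Rightarrow> real \<Rightarrow> real" where
  "hb n t = (if t > 0 then poly (hp n) (1/t) * exp (-1/t) else 0)"

lemma poly_exp_lim: "((\<lambda>s::real. poly p s * exp (-s)) \<longlongrightarrow> 0) at_top"
proof -
  have "((\<lambda>s. \<Sum>i\<le>degree p. coeff p i * (s ^ i / exp s)) \<longlongrightarrow> 0) at_top"
    by (intro tendsto_null_sum tendsto_mult_right_zero tendsto_power_div_exp_0)
  moreover have "poly p s * exp (-s) = (\<Sum>i\<le>degree p. coeff p i * (s ^ i / exp s))" for s
    by (simp add: poly_altdef sum_distrib_right sum_divide_distrib exp_minus divide_inverse mult.assoc)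
  ultimately show ?thesis by simp
qed

lemma hd_deriv: "(hb n has_real_derivative hb (Suc n) t) (at t)"
proof -
  consider "t > 0" | "t < 0" | "t = 0" by linarith
  then show ?thesis
  proof cases
    case 1
    let ?p = "hp n"
    have "((\<lambda>t. poly ?p (1/t) * exp (-1/t)) has_real_derivative
       (poly (pderiv ?p) (1/t) * (- 1 / t^2)) * exp (-1/t) + poly ?p (1/t) * (exp (-1/t) * (1/t^2))) (at t)"
      using 1 by (auto intro!: derivative_eq_intros simp: power2_eq_square field_simps)
    moreover have "(poly (pderiv ?p) (1/t) * (- 1 / t^2)) * exp (-1/t) + poly ?p (1/t) * (exp (-1/t) * (1/t^2))
        = hb (Suc n) t"
      using 1 by (simp add: hb_def algebra_simps power2_eq_square)
    ultimately have "((\<lambda>t. poly ?p (1/t) * exp (-1/t)) has_real_derivative hb (Suc n) t) (at t)" by simp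
    then show ?thesis
      by (rule has_field_derivative_transform_within_open[where S="{0<..}"]) (use 1 in \<open>auto simp: hb_def\<close>)
  next
    case 2
    have "((\<lambda>t. 0) has_real_derivative 0) (at t)" by simp
    then have "(hb n has_real_derivative 0) (at t)"
      by (rule has_field_derivative_transform_within_open[where S="{..<0}"]) (use 2 in \<open>auto simp: hb_def\<close>)
    then show ?thesis using 2 by (simp add: hb_def)
  next
    case 3
    have r: "((\<lambda>y. (hb n y - hb n 0) / (y - 0)) \<longlongrightarrow> 0) (at_right 0)"
    proof -
      have "((\<lambda>s. poly (pCons 0 (hp n)) s * exp (-s)) \<longlongrightarrow> 0) at_top" by (rule poly_exp_lim)
      then have "((\<lambda>y. poly (pCons 0 (hp n)) (inverse y) * exp (- inverse y)) \<longlongrightarrow> 0) (at_right 0)"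
        by (rule filterlim_compose[OF _ filterlim_inverse_at_top_right])
      then show ?thesis
        by (rule Lim_transform_eventually)
          (auto simp: eventually_at_right_field hb_def field_simps intro!: exI[of _ 1])
    qed
    have l: "((\<lambda>y. (hb n y - hb n 0) / (y - 0)) \<longlongrightarrow> 0) (at_left 0)"
      by (rule Lim_transform_eventually[of "\<lambda>_. 0"]) (auto simp: eventually_at_left_field hb_def intro!: exI[of _ "-1"])
    have "((\<lambda>y. (hb n y - hb n 0) / (y - 0)) \<longlongrightarrow> 0) (at 0)"
      using r l by (simp add: filterlim_at_split)
    then show ?thesis using 3 by (simp add: has_field_derivative_iff hb_def)
  qed
qed

inductive sm :: "(real^2 \<Rightarrow> real) \<Rightarrow> bool" where
  atom: "sm (\<lambda>z. hb n (a * z$j + b))"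
| const: "sm (\<lambda>z. c)"
| add: "sm f \<Longrightarrow> sm g \<Longrightarrow> sm (\<lambda>z. f z + g z)"
| mult: "sm f \<Longrightarrow> sm g \<Longrightarrow> sm (\<lambda>z. f z * g z)"

lemma atom_has_derivative:
  "((\<lambda>z::real^2. hb n (a * z$j + b)) has_derivative (\<lambda>h. hb (Suc n) (a * z$j + b) * (a * h$j))) (at z)"
proof -
  have "((\<lambda>z::real^2. a * z$j + b) has_derivative (\<lambda>h. a * h$j)) (at z)"
    by (auto intro!: derivative_eq_intros)
  moreover have "(hb n has_derivative (\<lambda>x. hb (Suc n) (a * z$j + b) * x)) (at (a * z$j + b))"
    using hd_deriv[of n "a * z$j + b"] by (simp add: has_field_derivative_def)
  ultimately show ?thesis using diff_chain_at by (fastforce simp: o_def)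
qed

lemma sm_diff: "sm f \<Longrightarrow> (\<forall>z. f differentiable at z) \<and> (\<forall>i. sm (pd i f))"
proof (induction rule: sm.induct)
  case (atom n a j b)
  have e: "pd i (\<lambda>z. hb n (a * z$j + b)) = (\<lambda>z. (if i = j then a else 0) * hb (Suc n) (a * z$j + b))" for i
    by (rule ext, subst pd_eq[OF atom_has_derivative]) (auto simp: axis_def)
  have "\<forall>z. (\<lambda>z. hb n (a * z$j + b)) differentiable at z"
    using atom_has_derivative differentiable_def by blast
  moreover have "sm (\<lambda>z. (if i = j then a else 0) * hb (Suc n) (a * z$j + b))" for i
    by (intro sm.intros)
  ultimately show ?case unfolding e by blast
next
  case (const c)
  have e: "pd i (\<lambda>z. c) = (\<lambda>z. 0)" for i by (simp add: fun_eq_iff)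
  show ?case unfolding e by (auto intro: sm.intros)
next
  case (add f g)
  have e: "pd i (\<lambda>z. f z + g z) = (\<lambda>z. pd i f z + pd i g z)" for i
    using add.IH by (simp add: fun_eq_iff pd_add)
  show ?case unfolding e using add.IH by (auto intro: sm.intros)
next
  case (mult f g)
  have e: "pd i (\<lambda>z. f z * g z) = (\<lambda>z. pd i f z * g z + f z * pd i g z)" for i
    using mult.IH by (simp add: fun_eq_iff pd_mult)
  show ?case unfolding e using mult.IH mult.hyps by (auto intro!: sm.intros)
qed

lemma sm_Ck: "sm f \<Longrightarrow> Ck k f"
proof (induction k arbitrary: f)
  case 0
  then show ?case using sm_diff
    by (simp add: differentiable_at_imp_differentiable_on differentiable_imp_continuous_on)
next
  case (Suc k)
  then show ?case using sm_diff[OF Suc.prems]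
    by (simp add: differentiable_at_imp_differentiable_on differentiable_imp_continuous_on)
qed




lemma hb0: "hb 0 t = (if t > 0 then exp (-1/t) else 0)"
  by (simp add: hb_def)

lemma bump:
  assumes d: "\<delta> > 0"
  obtains f where "f \<in> C0_inf" "\<And>z. f z \<ge> 0" "f z0 > 0"
    "\<And>z. f z \<noteq> 0 \<Longrightarrow> \<bar>z$1 - z0$1\<bar> < \<delta> \<and> \<bar>z$2 - z0$2\<bar> < \<delta>"
proof -
  define f where "f z = hb 0 (1 * z$1 + (\<delta> - z0$1)) * hb 0 ((-1) * z$1 + (\<delta> + z0$1))
     * hb 0 (1 * z$2 + (\<delta> - z0$2)) * hb 0 ((-1) * z$2 + (\<delta> + z0$2))" for z :: "real^2"
  have "sm f" unfolding f_def[abs_def] by (intro sm.intros)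
  then have ck: "Ck k f" for k by (rule sm_Ck)
  have supp: "\<bar>z$1 - z0$1\<bar> < \<delta> \<and> \<bar>z$2 - z0$2\<bar> < \<delta>" if "f z \<noteq> 0" for z
    using that by (auto simp: f_def hb0 split: if_splits)
  have "{z. f z \<noteq> 0} \<subseteq> cball z0 (2 * \<delta>)"
  proof
    fix z assume "z \<in> {z. f z \<noteq> 0}"
    then have s: "\<bar>z$1 - z0$1\<bar> < \<delta>" "\<bar>z$2 - z0$2\<bar> < \<delta>" using supp by auto
    have "dist z0 z = norm (z - z0)" by (simp add: dist_norm norm_minus_commute)
    also have "\<dots> \<le> \<bar>(z - z0)$1\<bar> + \<bar>(z - z0)$2\<bar>" using norm_le_l1_cart[of "z - z0"] by (simp add: sum_2)
    finally show "z \<in> cball z0 (2 * \<delta>)" using s by simp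
  qed
  then have "bounded {z. f z \<noteq> 0}" by (rule bounded_subset[OF bounded_cball])
  then have "f \<in> C0_inf" using ck compact_closure by (auto simp: C0_inf_def)
  moreover have "f z \<ge> 0" for z by (simp add: f_def hb0)
  moreover have "f z0 > 0" using d by (simp add: f_def hb0)
  ultimately show ?thesis using that supp by blast
qed

lemma int_pos:
  fixes G :: "real^2 \<Rightarrow> real"
  assumes Gc: "continuous_on UNIV G" and Gn: "\<And>z. G z \<ge> 0" and Gi: "integrable lborel G" and G0: "G z0 > 0"
  shows "integral\<^sup>L lborel G > 0"
proof -
  obtain r where r: "r > 0" "\<And>z. dist z z0 < r \<Longrightarrow> dist (G z) (G z0) < G z0 / 2"
    using Gc G0 unfolding continuous_on_iff by (metis UNIV_I half_gt_zero)
  define c where "c = G z0 / 2"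
  have c: "c > 0" using G0 by (simp add: c_def)
  have ii: "integrable lborel (\<lambda>z. indicator (cball z0 (r/2)) z *\<^sub>R c)"
    by (rule borel_integrable_compact) auto
  have "integral\<^sup>L lborel (\<lambda>z. indicator (cball z0 (r/2)) z *\<^sub>R c) \<le> integral\<^sup>L lborel G"
  proof (rule integral_mono[OF ii Gi])
    fix z
    show "indicator (cball z0 (r/2)) z *\<^sub>R c \<le> G z"
    proof (cases "z \<in> cball z0 (r/2)")
      case True
      then have "dist z z0 < r" using r by (simp add: dist_commute)
      then have "dist (G z) (G z0) < c" using r(2)[of z] c_def by simp
      then have "G z > c" unfolding dist_real_def c_def by arith
      then show ?thesis using True c by simp
    qed (simp add: Gn)
  qed
  moreover have "integral\<^sup>L lborel (\<lambda>z. indicator (cball z0 (r/2)) z *\<^sub>R c) = measure lborel (cball z0 (r/2)) * c"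
  proof -
    have "integrable lborel (indicator (cball z0 (r/2)) :: real^2 \<Rightarrow> real)"
      using borel_integrable_compact[of "cball z0 (r/2)" "\<lambda>_. 1::real"] by simp
    then show ?thesis by simp
  qed
  moreover have "measure lborel (cball z0 (r/2)) > 0" using r by simp
  ultimately show ?thesis using c by (smt (verit) mult_pos_pos)
qed

lemma conv:
  fixes Q \<rho> :: "real^2 \<Rightarrow> real"
  assumes Qc: "continuous_on UNIV Q" and rc: "continuous_on UNIV \<rho>" and rp: "\<And>z. \<rho> z > 0"
    and H: "\<And>f. f \<in> C0_inf \<Longrightarrow> integral\<^sup>L lborel (\<lambda>z. f z * \<rho> z * Q z) = 0"
  shows "Q z0 = 0"
proof (rule ccontr)
  assume c: "Q z0 \<noteq> 0"
  obtain d where d: "d > 0" "\<And>z. dist z z0 < d \<Longrightarrow> dist (Q z) (Q z0) < \<bar>Q z0\<bar>"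
    using Qc c unfolding continuous_on_iff by (metis UNIV_I zero_less_abs_iff)
  obtain f where f: "f \<in> C0_inf" "\<And>z. f z \<ge> 0" "f z0 > 0"
    "\<And>z. f z \<noteq> 0 \<Longrightarrow> \<bar>z$1 - z0$1\<bar> < d/2 \<and> \<bar>z$2 - z0$2\<bar> < d/2"
    using bump[of "d/2" z0] d by auto
  have QQ: "Q z * Q z0 > 0" if "f z \<noteq> 0" for z
  proof -
    have "dist z z0 = norm (z - z0)" by (simp add: dist_norm)
    also have "\<dots> \<le> \<bar>(z - z0)$1\<bar> + \<bar>(z - z0)$2\<bar>" using norm_le_l1_cart[of "z - z0"] by (simp add: sum_2)
    finally have "dist z z0 < d" using f(4)[OF that] by simp
    then have "\<bar>Q z - Q z0\<bar> < \<bar>Q z0\<bar>" using d by (simp add: dist_real_def)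
    then show ?thesis
      by (cases "Q z0 > 0") (auto simp: abs_if zero_less_mult_iff split: if_splits)
  qed
  define G where "G z = f z * \<rho> z * Q z * Q z0" for z
  note cf = C0_facts[OF f(1)]
  obtain R where R: "\<And>z. norm z > R \<Longrightarrow> f z = 0" using cf(6) by blast
  have Gc: "continuous_on UNIV G" unfolding G_def[abs_def] by (intro continuous_intros cf(2) rc Qc)
  have Gn: "G z \<ge> 0" for z
  proof (cases "f z = 0")
    case False
    then have "f z > 0" using f(2)[of z] by simp
    then show ?thesis using QQ[OF False] rp[of z] by (simp add: G_def mult.assoc)
  qed (simp add: G_def)
  have Gi: "integrable lborel G" by (rule integrable_supp[OF Gc, of R]) (simp add: G_def R)
  have G0: "G z0 > 0"
  proof -
    have "Q z0 * Q z0 > 0" using c not_real_square_gt_zero by blast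
    then show ?thesis using f(3) rp[of z0] by (simp add: G_def mult.assoc)
  qed
  have "integral\<^sup>L lborel G = integral\<^sup>L lborel (\<lambda>z. f z * \<rho> z * Q z) * Q z0"
    unfolding G_def by simp
  also have "\<dots> = 0" using H[OF f(1)] by simp
  finally show False using int_pos[OF Gc Gn Gi G0] by simp
qed




lemma quad_cont: "continuous_on UNIV (quad c0 c1 c2 c3 c4 c5)"
  unfolding quad_def[abs_def] by (intro continuous_intros)

lemma quad_Ck1: "Ck 1 (quad c0 c1 c2 c3 c4 c5)"
proof -
  have e1: "pd 1 (quad c0 c1 c2 c3 c4 c5) = (\<lambda>z. c1 + 2 * c3 * z$1 + c4 * z$2)"
    by (simp add: fun_eq_iff pd_quad1)
  have e2: "pd 2 (quad c0 c1 c2 c3 c4 c5) = (\<lambda>z. c2 + c4 * z$1 + 2 * c5 * z$2)"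
    by (simp add: fun_eq_iff pd_quad2)
  have "continuous_on UNIV (pd i (quad c0 c1 c2 c3 c4 c5))" for i
  proof (cases "i = 1")
    case True
    show ?thesis unfolding True e1 by (intro continuous_intros)
  next
    case False
    then have "i = 2" using exhaust_2[of i] by simp
    show ?thesis unfolding \<open>i = 2\<close> e2 by (intro continuous_intros)
  qed
  moreover have "quad c0 c1 c2 c3 c4 c5 differentiable at z" for z
    using quad_has_derivative differentiable_def by blast
  ultimately show ?thesis by (simp add: quad_cont)
qed

definition vq :: "real \<Rightarrow> real \<Rightarrow> real \<Rightarrow> real \<Rightarrow> real \<Rightarrow> real \<Rightarrow> real \<Rightarrow> real \<Rightarrow> real \<Rightarrow> real \<Rightarrow> real \<Rightarrow> real \<Rightarrow> real^2 \<Rightarrow> real^2" where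
  "vq c0 c1 c2 c3 c4 c5 d0 d1 d2 d3 d4 d5 z = vector [quad c0 c1 c2 c3 c4 c5 z, quad d0 d1 d2 d3 d4 d5 z]"

lemma vq_comp: "vq c0 c1 c2 c3 c4 c5 d0 d1 d2 d3 d4 d5 z $ 1 = quad c0 c1 c2 c3 c4 c5 z"
  "vq c0 c1 c2 c3 c4 c5 d0 d1 d2 d3 d4 d5 z $ 2 = quad d0 d1 d2 d3 d4 d5 z"
  by (simp_all add: vq_def)

lemma vq_C1: "C1_field (vq c0 c1 c2 c3 c4 c5 d0 d1 d2 d3 d4 d5)"
  unfolding C1_field_def
proof
  fix i :: 2
  show "Ck 1 (\<lambda>z. vq c0 c1 c2 c3 c4 c5 d0 d1 d2 d3 d4 d5 z $ i)"
    using exhaust_2[of i] by (elim disjE) (simp_all only: vq_comp quad_Ck1)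
qed

lemma vq_div: "div_field (vq c0 c1 c2 c3 c4 c5 d0 d1 d2 d3 d4 d5) z = c1 + 2 * c3 * z$1 + c4 * z$2 + d2 + d4 * z$1 + 2 * d5 * z$2"
  by (simp add: div_field_def sum_2 vq_comp pd_quad1 pd_quad2)

lemma vq_eqI: "(\<And>z. V z $ 1 = quad c0 c1 c2 c3 c4 c5 z) \<Longrightarrow> (\<And>z. V z $ 2 = quad d0 d1 d2 d3 d4 d5 z)
  \<Longrightarrow> V = vq c0 c1 c2 c3 c4 c5 d0 d1 d2 d3 d4 d5"
  by (auto simp: fun_eq_iff vec_eq_iff forall_2 vq_comp)




theorem lemma3p6:
  fixes A G S :: "real^2^2"
    and a00 a20 a21 a22 b00 b20 b21 b22 :: real
    and Phi :: "real^2 \<Rightarrow> real" and \<mu> :: "(real^2) measure"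
    and H P Ptil Gtil :: "real^2 \<Rightarrow> real^2"
  assumes A_sym: "sym_mat A" and A_pd: "pos_def_mat A"
    and S_sym: "sym_mat S"
    and SG: "S ** G + transpose G ** S = 2 *\<^sub>R (S ** A ** S)"
    and trG: "trace (G - A ** S) = 0"
    and Phi_def: "\<And>z. Phi z = 1/2 * (S$1$1 * (z$1)^2 + 2 * S$1$2 * z$1 * z$2 + S$2$2 * (z$2)^2)"
    and mu_def: "\<mu> = density lborel (\<lambda>z. ennreal (exp (2 * Phi z)))"
    and H_def: "\<And>z. H z = vector [a00 + a20 * (z$1)^2 + a21 * z$1 * z$2 + a22 * (z$2)^2,
                                    b00 + b20 * (z$1)^2 + b21 * z$1 * z$2 + b22 * (z$2)^2]"
    and P_def: "\<And>z. P z = G *v z + H z"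
    and Ptil_def: "\<And>z. Ptil z = S *v z + P z - A *v (S *v z)"
    and Gtil_def: "\<And>z. Gtil z = S *v z + (G - A ** S) *v z"
  shows
   "(let sys = (S$1$1 * a20 + S$1$2 * b20 = 0
              \<and> S$1$2 * a22 + S$2$2 * b22 = 0
              \<and> S$1$1 * a22 + S$1$2 * a21 + S$1$2 * b22 + S$2$2 * b21 = 0
              \<and> S$1$1 * a21 + S$1$2 * a20 + S$1$2 * b21 + S$2$2 * b20 = 0
              \<and> S$1$1 * a00 + S$1$2 * b00 + a20 + b21 / 2 = 0
              \<and> S$1$2 * a00 + S$2$2 * b00 + b22 + a21 / 2 = 0)
     in (sys \<longleftrightarrow> div_mu_zero \<mu> H)
      \<and> (sys \<longleftrightarrow> (\<forall>z. grad Phi z \<bullet> H z + 1/2 * div_field H z = 0))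
      \<and> (sys \<longleftrightarrow> inf_invariant \<mu> (Lop A P))
      \<and> (sys \<longrightarrow> (is_SOHHD Phi (\<lambda>z. (G - A ** S) *v z + H z)
                   \<longleftrightarrow> (a20 = - b21 / 2 \<and> b22 = - a21 / 2))))
    \<and> (inf_invariant \<mu> (Lop A P) \<longrightarrow>
         inf_invariant \<mu> (Lop A (\<lambda>z. G *v z))
       \<and> inf_invariant \<mu> (Lop (mat 1) (\<lambda>z. S *v z))
       \<and> inf_invariant \<mu> (Lop (mat 1) Gtil)
       \<and> inf_invariant \<mu> (Lop (mat 1) Ptil))"
proof -
  define M where "M = G - A ** S"
  note rf = rho_facts[OF S_sym Phi_def]
  have S21: "S$2$1 = S$1$2" using sym2[OF S_sym] .
  have trM: "M$1$1 + M$2$2 = 0" using trG by (simp add: M_def trace_def sum_2)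
  have orth: "(S *v z) \<bullet> (M *v z) = 0" for z
  proof -
    have "(S *v z) \<bullet> (M *v z) = 1/2 * (\<Sum>i\<in>UNIV. \<Sum>j\<in>UNIV. z$i * z$j *
        ((S ** G + transpose G ** S)$i$j - (2 *\<^sub>R (S ** A ** S))$i$j))"
      by (simp add: M_def inner_vec_def matrix_vector_mult_def matrix_matrix_mult_def transpose_def sum_2 S21 algebra_simps)
    also have "\<dots> = 0" using SG by simp
    finally show ?thesis .
  qed
  have Hvq: "H = vq a00 0 0 a20 a21 a22 b00 0 0 b20 b21 b22"
    by (rule vq_eqI) (simp_all add: H_def quad_def)
  have Uvq: "(\<lambda>z. M *v z + H z) = vq a00 (M$1$1) (M$1$2) a20 a21 a22 b00 (M$2$1) (M$2$2) b20 b21 b22"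
    by (rule vq_eqI) (simp_all add: H_def quad_def matrix_vector_mult_def sum_2 algebra_simps)
  have Mvq: "(\<lambda>z. M *v z) = vq 0 (M$1$1) (M$1$2) 0 0 0 0 (M$2$1) (M$2$2) 0 0 0"
    by (rule vq_eqI) (simp_all add: quad_def matrix_vector_mult_def sum_2)
  have Zvq: "(\<lambda>z. 0::real^2) = vq 0 0 0 0 0 0 0 0 0 0 0 0"
    by (rule vq_eqI) (simp_all add: quad_def)
  define q where "q z = div_field H z + 2 * ((S *v z) \<bullet> H z)" for z
  define E1 where "E1 = S$1$1 * a20 + S$1$2 * b20"
  define E2 where "E2 = S$1$2 * a22 + S$2$2 * b22"
  define E3 where "E3 = S$1$1 * a22 + S$1$2 * a21 + S$1$2 * b22 + S$2$2 * b21"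
  define E4 where "E4 = S$1$1 * a21 + S$1$2 * a20 + S$1$2 * b21 + S$2$2 * b20"
  define E5 where "E5 = S$1$1 * a00 + S$1$2 * b00 + a20 + b21 / 2"
  define E6 where "E6 = S$1$2 * a00 + S$2$2 * b00 + b22 + a21 / 2"
  have qform: "q z = 2 * (E1 * (z$1)^3 + E4 * (z$1)^2 * z$2 + E3 * z$1 * (z$2)^2 + E2 * (z$2)^3 + E5 * z$1 + E6 * z$2)" for z
    unfolding q_def Hvq vq_div
    by (simp add: inner_vec_def sum_2 vq_comp quad_def matrix_vector_mult_def S21 E1_def E2_def E3_def E4_def E5_def E6_def
        algebra_simps power2_eq_square power3_eq_cube)
  define sys where "sys \<longleftrightarrow> (E1 = 0 \<and> E2 = 0 \<and> E3 = 0 \<and> E4 = 0 \<and> E5 = 0 \<and> E6 = 0)"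
  have sysq: "sys \<longleftrightarrow> (\<forall>z. q z = 0)"
  proof
    assume "sys" then show "\<forall>z. q z = 0" by (simp add: sys_def qform)
  next
    assume h: "\<forall>z. q z = 0"
    have "q (vector [1,0]) = 0" "q (vector [2,0]) = 0" "q (vector [0,1]) = 0" "q (vector [0,2]) = 0"
      "q (vector [1,1]) = 0" "q (vector [1,-1]) = 0" using h by auto
    then show sys unfolding qform sys_def by simp
  qed
  have qc: "continuous_on UNIV q"
    unfolding qform[abs_def] by (intro continuous_intros)
  have gradPhi: "grad Phi z = S *v z" for z
    by (simp add: grad_def vec_eq_iff rf(5))
  have divH: "div_field H z = (2 * a20 + b21) * z$1 + (a21 + 2 * b22) * z$2" for z
    unfolding Hvq vq_div by (simp add: algebra_simps)
  have divU: "div_field (\<lambda>z. M *v z + H z) z = (2 * a20 + b21) * z$1 + (a21 + 2 * b22) * z$2" for z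
    unfolding Uvq vq_div using trM by (simp add: algebra_simps)
  have qU: "div_field (\<lambda>z. M *v z + H z) z + 2 * ((S *v z) \<bullet> (M *v z + H z)) = q z" for z
    unfolding q_def divU divH inner_add_right orth by simp
  have qM: "div_field (\<lambda>z. M *v z) z + 2 * ((S *v z) \<bullet> (M *v z)) = 0" for z
    unfolding Mvq vq_div using trM orth[of z] Mvq by (simp add: algebra_simps)
  have sym0: "sym_mat (0::real^2^2)" by (simp add: sym_mat_def transpose_def vec_eq_iff)
  have sym1: "sym_mat (mat 1::real^2^2)" by (simp add: sym_mat_def)
  have intH: "integral\<^sup>L \<mu> (\<lambda>z. H z \<bullet> grad f z) = - integral\<^sup>L lborel (\<lambda>z. f z * exp (2 * Phi z) * q z)"
    if f: "f \<in> C0_inf" for f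
  proof -
    have "(\<lambda>z. H z \<bullet> grad f z) = Lop 0 H f"
      by (simp add: Lop_def fun_eq_iff trace_def matrix_matrix_mult_def)
    moreover have "integral\<^sup>L \<mu> (Lop 0 H f) = - integral\<^sup>L lborel (\<lambda>z. f z * exp (2 * Phi z) * (div_field H z + 2 * ((S *v z) \<bullet> H z)))"
      unfolding mu_def by (rule gen_int[OF sym0 S_sym Phi_def _ _ f]) (simp_all add: Hvq vq_C1)
    ultimately show ?thesis by (simp add: q_def)
  qed
  have PU: "M *v z + H z = P z - A *v (S *v z)" for z
    by (simp add: M_def P_def matrix_vector_mult_diff_rdistrib matrix_vector_mul_assoc)
  have intP: "integral\<^sup>L \<mu> (Lop A P f) = - integral\<^sup>L lborel (\<lambda>z. f z * exp (2 * Phi z) * q z)"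
    if f: "f \<in> C0_inf" for f
    unfolding mu_def qU[symmetric]
    by (rule gen_int[OF A_sym S_sym Phi_def PU _ f]) (simp add: Uvq vq_C1)
  have rpos: "\<And>z. exp (2 * Phi z) > 0" by simp
  have conv': "\<forall>z. q z = 0" if "\<And>f. f \<in> C0_inf \<Longrightarrow> integral\<^sup>L lborel (\<lambda>z. f z * exp (2 * Phi z) * q z) = 0"
    using conv[OF qc rf(3) rpos that] by blast
  have divmu: "div_mu_zero \<mu> H \<longleftrightarrow> (\<forall>z. q z = 0)"
  proof
    assume "div_mu_zero \<mu> H"
    then show "\<forall>z. q z = 0" using intH by (intro conv') (simp add: div_mu_zero_def)
  next
    assume "\<forall>z. q z = 0"
    then show "div_mu_zero \<mu> H" using intH by (simp add: div_mu_zero_def)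
  qed
  have invP: "inf_invariant \<mu> (Lop A P) \<longleftrightarrow> (\<forall>z. q z = 0)"
  proof
    assume "inf_invariant \<mu> (Lop A P)"
    then show "\<forall>z. q z = 0" using intP by (intro conv') (simp add: inf_invariant_def)
  next
    assume "\<forall>z. q z = 0"
    then show "inf_invariant \<mu> (Lop A P)" using intP by (simp add: inf_invariant_def)
  qed
  have gradH: "grad Phi z \<bullet> H z + 1/2 * div_field H z = q z / 2" for z
    by (simp add: gradPhi q_def)
  have Bvq: "(\<lambda>z. (G - A ** S) *v z + H z) = vq a00 (M$1$1) (M$1$2) a20 a21 a22 b00 (M$2$1) (M$2$2) b20 b21 b22"
    using Uvq by (simp add: M_def)
  have sohhd: "is_SOHHD Phi (\<lambda>z. (G - A ** S) *v z + H z) \<longleftrightarrow> (a20 = - b21 / 2 \<and> b22 = - a21 / 2)"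
    if q0: "\<forall>z. q z = 0"
  proof -
    have c1: "Ck 1 Phi" unfolding Phi_quad[OF Phi_def] by (rule quad_Ck1)
    have c2: "C1_field (\<lambda>z. (G - A ** S) *v z + H z)" unfolding Bvq by (rule vq_C1)
    have dB: "div_field (\<lambda>z. (G - A ** S) *v z + H z) z = (2 * a20 + b21) * z$1 + (a21 + 2 * b22) * z$2" for z
      using divU by (simp add: M_def)
    have oB: "grad Phi z \<bullet> ((G - A ** S) *v z + H z) = - 1/2 * ((2 * a20 + b21) * z$1 + (a21 + 2 * b22) * z$2)" for z
    proof -
      have "grad Phi z \<bullet> ((G - A ** S) *v z + H z) = (S *v z) \<bullet> H z"
        using orth[of z] by (simp add: gradPhi M_def inner_add_right)
      also have "\<dots> = - 1/2 * div_field H z" using q0[rule_format, of z] unfolding q_def by linarith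
      finally show ?thesis by (simp add: divH)
    qed
    have "(\<forall>z::real^2. (2 * a20 + b21) * z$1 + (a21 + 2 * b22) * z$2 = 0) \<longleftrightarrow> (a20 = - b21 / 2 \<and> b22 = - a21 / 2)"
    proof
      assume h: "\<forall>z::real^2. (2 * a20 + b21) * z$1 + (a21 + 2 * b22) * z$2 = 0"
      have "(2 * a20 + b21) * (vector [1,0]::real^2)$1 + (a21 + 2 * b22) * (vector [1,0]::real^2)$2 = 0"
        "(2 * a20 + b21) * (vector [0,1]::real^2)$1 + (a21 + 2 * b22) * (vector [0,1]::real^2)$2 = 0"
        using h by blast+
      then show "a20 = - b21 / 2 \<and> b22 = - a21 / 2" by simp
    qed simp
    then show ?thesis unfolding is_SOHHD_def using c1 c2 dB oB by simp
  qed
  have q0int: "integral\<^sup>L lborel (\<lambda>z. f z * exp (2 * Phi z) * X z) = 0" if "\<And>z. X z = 0" for f X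
    using that by simp
  have ii: "inf_invariant \<mu> (Lop A (\<lambda>z. G *v z))
       \<and> inf_invariant \<mu> (Lop (mat 1) (\<lambda>z. S *v z))
       \<and> inf_invariant \<mu> (Lop (mat 1) Gtil)
       \<and> inf_invariant \<mu> (Lop (mat 1) Ptil)" if q0: "\<forall>z. q z = 0"
  proof (intro conjI)
    show "inf_invariant \<mu> (Lop A (\<lambda>z. G *v z))"
      unfolding inf_invariant_def
    proof
      fix f assume f: "f \<in> C0_inf"
      have U: "M *v z = G *v z - A *v (S *v z)" for z
        by (simp add: M_def matrix_vector_mult_diff_rdistrib matrix_vector_mul_assoc)
      show "integral\<^sup>L \<mu> (Lop A (\<lambda>z. G *v z) f) = 0"
        unfolding mu_def
        by (subst gen_int[OF A_sym S_sym Phi_def U _ f]) (simp_all add: Mvq vq_C1 qM[unfolded Mvq])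
    qed
    show "inf_invariant \<mu> (Lop (mat 1) (\<lambda>z. S *v z))"
      unfolding inf_invariant_def
    proof
      fix f assume f: "f \<in> C0_inf"
      have U: "(0::real^2) = S *v z - mat 1 *v (S *v z)" for z by simp
      have d0: "div_field (\<lambda>z. 0::real^2) z = 0" for z unfolding Zvq vq_div by simp
      show "integral\<^sup>L \<mu> (Lop (mat 1) (\<lambda>z. S *v z) f) = 0"
        unfolding mu_def
        by (subst gen_int[OF sym1 S_sym Phi_def U _ f]) (simp_all add: Zvq[symmetric] d0 vq_C1[of 0 0 0 0 0 0 0 0 0 0 0 0, folded Zvq])
    qed
    show "inf_invariant \<mu> (Lop (mat 1) Gtil)"
      unfolding inf_invariant_def
    proof
      fix f assume f: "f \<in> C0_inf"
      have U: "M *v z = Gtil z - mat 1 *v (S *v z)" for z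
        by (simp add: M_def Gtil_def)
      show "integral\<^sup>L \<mu> (Lop (mat 1) Gtil f) = 0"
        unfolding mu_def
        by (subst gen_int[OF sym1 S_sym Phi_def U _ f]) (simp_all add: Mvq vq_C1 qM[unfolded Mvq])
    qed
    show "inf_invariant \<mu> (Lop (mat 1) Ptil)"
      unfolding inf_invariant_def
    proof
      fix f assume f: "f \<in> C0_inf"
      have U: "M *v z + H z = Ptil z - mat 1 *v (S *v z)" for z
        by (simp add: M_def Ptil_def P_def matrix_vector_mult_diff_rdistrib matrix_vector_mul_assoc)
      show "integral\<^sup>L \<mu> (Lop (mat 1) Ptil f) = 0"
        unfolding mu_def
        by (subst gen_int[OF sym1 S_sym Phi_def U _ f]) (simp_all add: Uvq vq_C1 qU[unfolded Uvq] q0)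
    qed
  qed
  have gq: "(\<forall>z. grad Phi z \<bullet> H z + 1/2 * div_field H z = 0) \<longleftrightarrow> (\<forall>z. q z = 0)"
  proof -
    have "grad Phi z \<bullet> H z + 1/2 * div_field H z = 0 \<longleftrightarrow> q z = 0" for z
      using gradH[of z] by auto
    then show ?thesis by blast
  qed
  note s = sysq[unfolded sys_def E1_def E2_def E3_def E4_def E5_def E6_def]
  show ?thesis
    apply (simp only: Let_def s divmu invP gq)
    using sohhd ii by blast
qed


end
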